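(* Let $G$ be a finite group and $\mathcal{A}$ a finite subgroup of $\mathbb{C}^\times$. Let $\psi\colon G\times G\to\mathcal{A}$ be a normalised 2-cocycle, and let $\Gamma=(G,\mathcal{A},\psi)$ be the central extension with underlying set $\mathcal{A}\times G$ and multiplication $(a,g)(b,h)=(ab\,\psi(g,h),gh)$. Index rows and columns of $|G|\times|G|$ matrices by the elements of $G$ in a fixed ordering, and for $(a,g)\in\Gamma$ define \[R(a,g)=a\left[\psi(x,g)\delta^{xg}_{y}\right]_{x,y\in G},\qquad L(a,g)=a\left[\psi(g,g^{-1}x)\delta^{x}_{gy}\right]_{x,y\in G}.\] Then a complex matrix $M$ indexed by $G$ satisfies $R(a,g)ML(a,g)^\ast=M$ for all $(a,g)\in\Gamma$ if and only if there exists a map $\phi\colon G\to\mathbb{C}$ such that $M=[\psi(x,y)\phi(xy)]_{x,y\in G}$.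
   Context: A normalised 2-cocycle is a function $\psi\colon G\times G\to\mathcal{A}$ with $\psi(g,1)=\psi(1,g)=1$ and $\psi(g,h)\psi(gh,k)=\psi(g,hk)\psi(h,k)$ for all $g,h,k\in G$. $\delta^a_b$ is the Kronecker delta and $^\ast$ denotes conjugate transpose. *)

theory Defs
  imports Complex_Main "HOL-Algebra.Group"
begin

definition finite_subgroup_units :: "complex set \<Rightarrow> bool" where
  "finite_subgroup_units A \<longleftrightarrow> finite A \<and> 1 \<in> A \<and> 0 \<notin> A \<and>
     (\<forall>a\<in>A. \<forall>b\<in>A. a * b \<in> A) \<and> (\<forall>a\<in>A. inverse a \<in> A)"

definition normalised_2cocycle ::
  "('g, 'm) monoid_scheme \<Rightarrow> complex set \<Rightarrow> ('g \<Rightarrow> 'g \<Rightarrow> complex) \<Rightarrow> bool" where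
  "normalised_2cocycle G A psi \<longleftrightarrow>
     (\<forall>g\<in>carrier G. \<forall>h\<in>carrier G. psi g h \<in> A) \<and>
     (\<forall>g\<in>carrier G. psi g \<one>\<^bsub>G\<^esub> = 1 \<and> psi \<one>\<^bsub>G\<^esub> g = 1) \<and>
     (\<forall>g\<in>carrier G. \<forall>h\<in>carrier G. \<forall>k\<in>carrier G.
        psi g h * psi (g \<otimes>\<^bsub>G\<^esub> h) k = psi g (h \<otimes>\<^bsub>G\<^esub> k) * psi h k)"

definition gmat_mult ::
  "('g, 'm) monoid_scheme \<Rightarrow> ('g \<Rightarrow> 'g \<Rightarrow> complex) \<Rightarrow> ('g \<Rightarrow> 'g \<Rightarrow> complex) \<Rightarrow> ('g \<Rightarrow> 'g \<Rightarrow> complex)" where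
  "gmat_mult G P Q = (\<lambda>x y. \<Sum>u\<in>carrier G. P x u * Q u y)"

definition gmat_adj :: "('g \<Rightarrow> 'g \<Rightarrow> complex) \<Rightarrow> ('g \<Rightarrow> 'g \<Rightarrow> complex)" where
  "gmat_adj P = (\<lambda>x y. cnj (P y x))"

definition gmat_eq :: "('g, 'm) monoid_scheme \<Rightarrow> ('g \<Rightarrow> 'g \<Rightarrow> complex) \<Rightarrow> ('g \<Rightarrow> 'g \<Rightarrow> complex) \<Rightarrow> bool" where
  "gmat_eq G P Q \<longleftrightarrow> (\<forall>x\<in>carrier G. \<forall>y\<in>carrier G. P x y = Q x y)"

definition Rmat :: "('g, 'm) monoid_scheme \<Rightarrow> ('g \<Rightarrow> 'g \<Rightarrow> complex) \<Rightarrow> complex \<Rightarrow> 'g \<Rightarrow> ('g \<Rightarrow> 'g \<Rightarrow> complex)" where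
  "Rmat G psi a g = (\<lambda>x y. a * (psi x g * (if x \<otimes>\<^bsub>G\<^esub> g = y then 1 else 0)))"

definition Lmat :: "('g, 'm) monoid_scheme \<Rightarrow> ('g \<Rightarrow> 'g \<Rightarrow> complex) \<Rightarrow> complex \<Rightarrow> 'g \<Rightarrow> ('g \<Rightarrow> 'g \<Rightarrow> complex)" where
  "Lmat G psi a g = (\<lambda>x y. a * (psi g (inv\<^bsub>G\<^esub> g \<otimes>\<^bsub>G\<^esub> x) * (if x = g \<otimes>\<^bsub>G\<^esub> y then 1 else 0)))"

end

theory Submission
  imports Defs
begin

lemma norm_in_fsu:
  assumes "finite_subgroup_units A" "a \<in> A"
  shows "norm a = 1"
proof -
  have fin: "finite A" and one: "1 \<in> A" and z: "0 \<notin> A"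
    and mul: "\<And>x y. x \<in> A \<Longrightarrow> y \<in> A \<Longrightarrow> x * y \<in> A"
    and inv: "\<And>x. x \<in> A \<Longrightarrow> inverse x \<in> A"
    using assms(1) unfolding finite_subgroup_units_def by auto
  have "finite (norm ` A)" using fin by simp
  moreover have "norm ` A \<noteq> {}" using one by auto
  ultimately obtain m where mA: "m \<in> norm ` A" and mmax: "\<And>t. t \<in> norm ` A \<Longrightarrow> t \<le> m"
    using Max_in Max_ge by metis
  then obtain b where b: "b \<in> A" "norm b = m" by auto
  have bpos: "norm b > 0" using b z by (metis zero_less_norm_iff)
  have big: "\<And>c. c \<in> A \<Longrightarrow> \<not> norm c > 1"
  proof
    fix c assume c: "c \<in> A" "norm c > 1"
    have "norm (c * b) \<le> m" using mmax mul[OF c(1) b(1)] by auto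
    moreover have "norm (c * b) > m" using c(2) bpos b(2) by (simp add: norm_mult)
    ultimately show False by simp
  qed
  have "\<not> norm a > 1" using big assms(2) by blast
  moreover have "\<not> norm (inverse a) > 1" using big inv assms(2) by blast
  moreover have "a \<noteq> 0" using assms(2) z by auto
  ultimately show ?thesis
    by (metis linorder_neqE_linordered_idom norm_inverse one_less_inverse zero_less_norm_iff)
qed

lemma cnj_mult_self_fsu:
  assumes "finite_subgroup_units A" "a \<in> A"
  shows "a * cnj a = 1"
  using norm_in_fsu[OF assms] by (metis complex_norm_square of_real_1 power_one)

lemma key_formula:
  fixes G (structure)
  assumes G: "group G" and fin: "finite (carrier G)"
    and g: "g \<in> carrier G" and x: "x \<in> carrier G" and y: "y \<in> carrier G"
  shows "gmat_mult G (gmat_mult G (Rmat G psi a g) M) (gmat_adj (Lmat G psi a g)) x y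
    = a * cnj a * psi x g * cnj (psi g (inv\<^bsub>G\<^esub> g \<otimes>\<^bsub>G\<^esub> y)) * M (x \<otimes>\<^bsub>G\<^esub> g) (inv\<^bsub>G\<^esub> g \<otimes>\<^bsub>G\<^esub> y)"
proof -
  interpret group G by fact
  have xg: "x \<otimes> g \<in> carrier G" using x g by simp
  have giy: "inv g \<otimes> y \<in> carrier G" using g y by simp
  have RM: "gmat_mult G (Rmat G psi a g) M x v = a * psi x g * M (x \<otimes> g) v" for v
  proof -
    have "gmat_mult G (Rmat G psi a g) M x v = (\<Sum>u\<in>carrier G. if x \<otimes> g = u then a * psi x g * M u v else 0)"
      unfolding gmat_mult_def Rmat_def by (rule sum.cong) auto
    also have "\<dots> = a * psi x g * M (x \<otimes> g) v" using fin xg by (simp add: sum.delta)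
    finally show ?thesis .
  qed
  have "gmat_mult G (gmat_mult G (Rmat G psi a g) M) (gmat_adj (Lmat G psi a g)) x y
     = (\<Sum>v\<in>carrier G. if inv g \<otimes> y = v then a * psi x g * M (x \<otimes> g) v * (cnj a * cnj (psi g (inv g \<otimes> y))) else 0)"
    unfolding gmat_mult_def[of G "gmat_mult G (Rmat G psi a g) M"] gmat_adj_def Lmat_def RM
  proof (rule sum.cong)
    fix v assume v: "v \<in> carrier G"
    have "(y = g \<otimes> v) = (inv g \<otimes> y = v)"
      using v g y by (metis inv_solve_left)
    then show "a * psi x g * M (x \<otimes> g) v * cnj (a * (psi g (inv g \<otimes> y) * (if y = g \<otimes> v then 1 else 0))) =
         (if inv g \<otimes> y = v then a * psi x g * M (x \<otimes> g) v * (cnj a * cnj (psi g (inv g \<otimes> y))) else 0)"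
      by auto
  qed simp
  also have "\<dots> = a * psi x g * M (x \<otimes> g) (inv g \<otimes> y) * (cnj a * cnj (psi g (inv g \<otimes> y)))"
    using fin giy by (simp add: sum.delta)
  finally show ?thesis by (simp add: ac_simps)
qed

lemma lemma4p3_aux:
  fixes G :: "('g, 'm) monoid_scheme" (structure)
    and A :: "complex set"
    and psi :: "'g \<Rightarrow> 'g \<Rightarrow> complex"
    and M :: "'g \<Rightarrow> 'g \<Rightarrow> complex"
  assumes "group G" and "finite (carrier G)"
    and "finite_subgroup_units A"
    and "normalised_2cocycle G A psi"
  shows "(\<forall>a\<in>A. \<forall>g\<in>carrier G.
            gmat_eq G (gmat_mult G (gmat_mult G (Rmat G psi a g) M) (gmat_adj (Lmat G psi a g))) M)
         \<longleftrightarrow> (\<exists>phi :: 'g \<Rightarrow> complex.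
            gmat_eq G M (\<lambda>x y. psi x y * phi (x \<otimes>\<^bsub>G\<^esub> y)))"
proof -
  interpret group G by fact
  have psiA: "\<And>g h. g \<in> carrier G \<Longrightarrow> h \<in> carrier G \<Longrightarrow> psi g h \<in> A"
    and n1: "\<And>g. g \<in> carrier G \<Longrightarrow> psi g \<one> = 1"
    and n2: "\<And>g. g \<in> carrier G \<Longrightarrow> psi \<one> g = 1"
    and coc: "\<And>g h k. g \<in> carrier G \<Longrightarrow> h \<in> carrier G \<Longrightarrow> k \<in> carrier G \<Longrightarrow>
        psi g h * psi (g \<otimes> h) k = psi g (h \<otimes> k) * psi h k"
    using assms(4) unfolding normalised_2cocycle_def by auto
  have oneA: "1 \<in> A" using assms(3) unfolding finite_subgroup_units_def by auto
  show ?thesis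
  proof
    assume H: "\<forall>a\<in>A. \<forall>g\<in>carrier G.
            gmat_eq G (gmat_mult G (gmat_mult G (Rmat G psi a g) M) (gmat_adj (Lmat G psi a g))) M"
    show "\<exists>phi. gmat_eq G M (\<lambda>x y. psi x y * phi (x \<otimes> y))"
    proof (intro exI[of _ "\<lambda>w. M w \<one>"] gmat_eq_def[THEN iffD2] ballI)
      fix x y assume x: "x \<in> carrier G" and y: "y \<in> carrier G"
      have "gmat_mult G (gmat_mult G (Rmat G psi 1 y) M) (gmat_adj (Lmat G psi 1 y)) x y = M x y"
        using H oneA x y unfolding gmat_eq_def by blast
      then show "M x y = psi x y * M (x \<otimes> y) \<one>"
        using key_formula[OF assms(1,2) y x y, of psi 1 M] n1 y by simp
    qed
  next
    assume "\<exists>phi. gmat_eq G M (\<lambda>x y. psi x y * phi (x \<otimes> y))"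
    then obtain phi where phi: "\<And>x y. x \<in> carrier G \<Longrightarrow> y \<in> carrier G \<Longrightarrow> M x y = psi x y * phi (x \<otimes> y)"
      unfolding gmat_eq_def by blast
    show "\<forall>a\<in>A. \<forall>g\<in>carrier G.
            gmat_eq G (gmat_mult G (gmat_mult G (Rmat G psi a g) M) (gmat_adj (Lmat G psi a g))) M"
    proof (intro ballI gmat_eq_def[THEN iffD2])
      fix a g x y assume a: "a \<in> A" and g: "g \<in> carrier G" and x: "x \<in> carrier G" and y: "y \<in> carrier G"
      define z where "z = inv g \<otimes> y"
      have z: "z \<in> carrier G" using g y z_def by simp
      have gz: "g \<otimes> z = y" using g y unfolding z_def by (simp add: m_assoc[symmetric])
      have xgz: "x \<otimes> g \<otimes> z = x \<otimes> y" using x g z gz by (simp add: m_assoc)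
      have aa: "a * cnj a = 1" using cnj_mult_self_fsu[OF assms(3) a] .
      have pp: "psi g z * cnj (psi g z) = 1" using cnj_mult_self_fsu[OF assms(3) psiA[OF g z]] .
      have c: "psi x g * psi (x \<otimes> g) z = psi x y * psi g z" using coc[OF x g z] gz by simp
      have "gmat_mult G (gmat_mult G (Rmat G psi a g) M) (gmat_adj (Lmat G psi a g)) x y
          = (a * cnj a) * (psi x g * psi (x \<otimes> g) z) * cnj (psi g z) * phi (x \<otimes> y)"
        using key_formula[OF assms(1,2) g x y, of psi a M] phi[of "x \<otimes> g" z] x g z xgz
        unfolding z_def[symmetric] by (simp add: ac_simps)
      also have "\<dots> = psi x y * phi (x \<otimes> y) * (psi g z * cnj (psi g z))"
        using aa c by (simp add: ac_simps)
      also have "\<dots> = M x y" using pp phi[OF x y] by simp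
      finally show "gmat_mult G (gmat_mult G (Rmat G psi a g) M) (gmat_adj (Lmat G psi a g)) x y = M x y" .
    qed
  qed
qed

theorem lemma4p3:
  fixes G :: "('g, 'm) monoid_scheme"
    and A :: "complex set"
    and psi :: "'g \<Rightarrow> 'g \<Rightarrow> complex"
    and M :: "'g \<Rightarrow> 'g \<Rightarrow> complex"
  assumes "group G" and "finite (carrier G)"
    and "finite_subgroup_units A"
    and "normalised_2cocycle G A psi"
  shows "(\<forall>a\<in>A. \<forall>g\<in>carrier G.
            gmat_eq G (gmat_mult G (gmat_mult G (Rmat G psi a g) M) (gmat_adj (Lmat G psi a g))) M)
         \<longleftrightarrow> (\<exists>phi :: 'g \<Rightarrow> complex.
            gmat_eq G M (\<lambda>x y. psi x y * phi (x \<otimes>\<^bsub>G\<^esub> y)))"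
  using lemma4p3_aux[OF assms] .

end
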